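(* Let $n>2$, let $G_n=BS(1,n)=\langle a,b\mid bab^{-1}=a^n\rangle$, and let $\Gamma_n$ be its Cayley graph with respect to $\{a,b\}$. Let $x,y\in G_n$. If there exist $k,k'\in\mathbb{N}$ such that, with $\tilde{x}=xb^k$ and $\tilde{y}=yb^{k'}$, one has $\tilde{y}=\tilde{x}a$, then there is a geodesic in $\Gamma_n$ between $x$ and $y$ containing $\tilde{x}$ and $\tilde{y}$.
   Context: $\Gamma_n$ has vertex set $G_n$ and edges $\{g,gs\}$ for $s\in\{a^{\pm1},b^{\pm1}\}$, each of length 1, with the path-length metric. *)

theory Defs
  imports Complex_Main
begin

text \<open>Concrete model of BS(1,n) = < a, b | b a b^-1 = a^n >:
  the element (r, k) is the affine map t \<mapsto> n^k * t + r of the rationals;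
  the group product is composition, a = (1,0) (t \<mapsto> t+1), b = (0,1) (t \<mapsto> n t).
  Then b a b^-1 = a^n, and the subgroup generated by a, b consists exactly of
  the pairs (r,k) with r in Z[1/n] and k in Z.\<close>

type_synonym bs_elt = "rat \<times> int"

definition bs_mult :: "nat \<Rightarrow> bs_elt \<Rightarrow> bs_elt \<Rightarrow> bs_elt" where
  "bs_mult n g h = (fst g + (of_nat n) powi (snd g) * fst h, snd g + snd h)"

definition bs_one :: bs_elt where "bs_one = (0, 0)"
definition bs_a :: bs_elt where "bs_a = (1, 0)"
definition bs_a_inv :: bs_elt where "bs_a_inv = (-1, 0)"
definition bs_b :: bs_elt where "bs_b = (0, 1)"
definition bs_b_inv :: bs_elt where "bs_b_inv = (0, -1)"

fun bs_pow :: "nat \<Rightarrow> bs_elt \<Rightarrow> nat \<Rightarrow> bs_elt" where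
  "bs_pow n g 0 = bs_one"
| "bs_pow n g (Suc k) = bs_mult n (bs_pow n g k) g"

definition bs_carrier :: "nat \<Rightarrow> bs_elt set" where
  "bs_carrier n = {g. \<exists>m::int. \<exists>j::nat. fst g = of_int m / of_nat n ^ j}"

definition bs_gens :: "bs_elt set" where
  "bs_gens = {bs_a, bs_a_inv, bs_b, bs_b_inv}"

definition bs_adj :: "nat \<Rightarrow> bs_elt \<Rightarrow> bs_elt \<Rightarrow> bool" where
  "bs_adj n g h \<longleftrightarrow> (\<exists>s\<in>bs_gens. h = bs_mult n g s)"

definition bs_path :: "nat \<Rightarrow> bs_elt list \<Rightarrow> bool" where
  "bs_path n p \<longleftrightarrow> p \<noteq> [] \<and> (\<forall>i. Suc i < length p \<longrightarrow> bs_adj n (p ! i) (p ! Suc i))"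

definition bs_dist :: "nat \<Rightarrow> bs_elt \<Rightarrow> bs_elt \<Rightarrow> nat" where
  "bs_dist n g h = (LEAST m. \<exists>p. bs_path n p \<and> hd p = g \<and> last p = h \<and> length p = Suc m)"

definition bs_geodesic :: "nat \<Rightarrow> bs_elt \<Rightarrow> bs_elt \<Rightarrow> bs_elt list \<Rightarrow> bool" where
  "bs_geodesic n g h p \<longleftrightarrow> bs_path n p \<and> hd p = g \<and> last p = h \<and> length p = Suc (bs_dist n g h)"

end

theory Submission
  imports Defs
begin

fun acnt :: "bs_elt list \<Rightarrow> nat" where
  "acnt (u # v # rest) = (if snd u = snd v then 1 else 0) + acnt (v # rest)"
| "acnt _ = 0"

fun bcnt :: "bs_elt list \<Rightarrow> nat" where
  "bcnt (u # v # rest) = (if snd u = snd v then 0 else 1) + bcnt (v # rest)"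
| "bcnt _ = 0"

lemma cnt_len: "acnt p + bcnt p = length p - 1"
  by (induction p rule: acnt.induct) auto

lemma bs_path_Cons2: "bs_path n (u # v # rest) \<longleftrightarrow> bs_adj n u v \<and> bs_path n (v # rest)"
proof
  assume h: "bs_path n (u # v # rest)"
  then have H: "\<forall>i. Suc i < length (u # v # rest) \<longrightarrow> bs_adj n ((u # v # rest) ! i) ((u # v # rest) ! Suc i)"
    unfolding bs_path_def by blast
  have "bs_adj n u v" using H[rule_format, of 0] by simp
  moreover have "bs_path n (v # rest)" unfolding bs_path_def
  proof (intro conjI allI impI)
    fix i assume "Suc i < length (v # rest)"
    then have "Suc (Suc i) < length (u # v # rest)" by simp
    then have "bs_adj n ((u # v # rest) ! Suc i) ((u # v # rest) ! Suc (Suc i))" using H by blast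
    then show "bs_adj n ((v # rest) ! i) ((v # rest) ! Suc i)" by simp
  qed simp
  ultimately show "bs_adj n u v \<and> bs_path n (v # rest)" by blast
next
  assume h: "bs_adj n u v \<and> bs_path n (v # rest)"
  then have H: "\<forall>i. Suc i < length (v # rest) \<longrightarrow> bs_adj n ((v # rest) ! i) ((v # rest) ! Suc i)"
    unfolding bs_path_def by blast
  show "bs_path n (u # v # rest)" unfolding bs_path_def
  proof (intro conjI allI impI)
    fix i assume i: "Suc i < length (u # v # rest)"
    show "bs_adj n ((u # v # rest) ! i) ((u # v # rest) ! Suc i)"
    proof (cases i)
      case 0 then show ?thesis using h by simp
    next
      case (Suc j)
      then have "Suc j < length (v # rest)" using i by simp
      then have "bs_adj n ((v # rest) ! j) ((v # rest) ! Suc j)" using H by blast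
      then show ?thesis using Suc by simp
    qed
  qed simp
qed

lemma adj_cases:
  assumes "bs_adj n u w"
  shows "(snd w = snd u \<and> \<bar>fst w - fst u\<bar> = of_nat n powi snd u) \<or> (fst w = fst u \<and> \<bar>snd w - snd u\<bar> = 1)"
proof -
  obtain s where s: "s \<in> bs_gens" "w = bs_mult n u s" using assms unfolding bs_adj_def by blast
  have pos: "(0::rat) \<le> of_nat n powi snd u" by simp
  from s(1) show ?thesis unfolding bs_gens_def
  proof (elim insertE emptyE)
    assume "s = bs_a" then show ?thesis using s(2) pos by (simp add: bs_mult_def bs_a_def)
  next
    assume "s = bs_a_inv" then show ?thesis using s(2) pos by (simp add: bs_mult_def bs_a_inv_def)
  next
    assume "s = bs_b" then show ?thesis using s(2) by (simp add: bs_mult_def bs_b_def)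
  next
    assume "s = bs_b_inv" then show ?thesis using s(2) by (simp add: bs_mult_def bs_b_inv_def)
  qed
qed


lemma L1:
  assumes "n > 0"
  shows "bs_path n p \<Longrightarrow> (\<forall>v\<in>set p. snd v \<le> H) \<Longrightarrow>
    \<bar>fst (last p) - fst (hd p)\<bar> \<le> of_nat (acnt p) * (of_nat n) powi H"
proof (induction p rule: acnt.induct)
  case (1 u v rest)
  have adj: "bs_adj n u v" and pr: "bs_path n (v # rest)" using 1(2) bs_path_Cons2 by auto
  have IH: "\<bar>fst (last (v#rest)) - fst v\<bar> \<le> of_nat (acnt (v#rest)) * (of_nat n) powi H"
    using 1 pr by simp
  have uH: "snd u \<le> H" using 1(3) by simp
  have mono: "(of_nat n :: rat) powi snd u \<le> of_nat n powi H"
    using assms uH by (intro power_int_increasing) auto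
  have tri: "\<bar>fst (last (v#rest)) - fst u\<bar> \<le> \<bar>fst (last (v#rest)) - fst v\<bar> + \<bar>fst v - fst u\<bar>" by simp
  show ?case
  proof (cases "snd u = snd v")
    case True
    then have ev: "\<bar>fst v - fst u\<bar> = of_nat n powi snd u" using adj_cases[OF adj] by auto
    have ac: "of_nat (acnt (u # v # rest)) * (of_nat n :: rat) powi H
        = of_nat (acnt (v # rest)) * of_nat n powi H + of_nat n powi H"
      using True by (simp add: distrib_right)
    have eqs: "hd (u # v # rest) = u" "last (u # v # rest) = last (v # rest)" by simp_all
    show ?thesis unfolding eqs ac using IH tri mono ev by linarith
  next
    case False
    then have fv: "fst v = fst u" using adj_cases[OF adj] by auto
    have ac: "acnt (u # v # rest) = acnt (v # rest)" using False by simp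
    have eqs: "hd (u # v # rest) = u" "last (u # v # rest) = last (v # rest)" by simp_all
    show ?thesis unfolding eqs ac using IH fv by simp
  qed
qed (auto simp: bs_path_def)

lemma edge_b:
  assumes "bs_adj n u w"
  shows "snd w - snd u \<le> int (bcnt (u # w # rest)) - int (bcnt (w # rest))"
    and "snd u - snd w \<le> int (bcnt (u # w # rest)) - int (bcnt (w # rest))"
  using adj_cases[OF assms] by (cases "snd u = snd w"; auto)+

lemma L2b:
  "bs_path n p \<Longrightarrow> snd (hd p) - snd (last p) \<le> int (bcnt p) \<and> snd (last p) - snd (hd p) \<le> int (bcnt p)"
proof (induction p rule: bcnt.induct)
  case (1 u w rest)
  have adj: "bs_adj n u w" and pr: "bs_path n (w # rest)" using 1(2) bs_path_Cons2 by auto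
  note e = edge_b[OF adj, of rest]
  have IH: "snd w - snd (last (w#rest)) \<le> int (bcnt (w#rest))"
     "snd (last (w#rest)) - snd w \<le> int (bcnt (w#rest))" using 1(1)[OF pr] by simp_all
  have eqs: "hd (u # w # rest) = u" "last (u # w # rest) = last (w # rest)" by simp_all
  show ?case unfolding eqs using IH e by linarith
qed (auto simp: bs_path_def)

lemma L2:
  "bs_path n p \<Longrightarrow> v \<in> set p \<Longrightarrow> (snd v - snd (hd p)) + (snd v - snd (last p)) \<le> int (bcnt p)"
proof (induction p arbitrary: v rule: bcnt.induct)
  case (1 u w rest)
  have adj: "bs_adj n u w" and pr: "bs_path n (w # rest)" using 1(2) bs_path_Cons2 by auto
  note e = edge_b[OF adj, of rest]
  have eqs: "hd (u # w # rest) = u" "last (u # w # rest) = last (w # rest)" by simp_all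
  show ?case
  proof (cases "v = u")
    case True
    have H: "snd w - snd (last (w#rest)) \<le> int (bcnt (w#rest))"
      using L2b[OF pr] by simp
    show ?thesis unfolding eqs True using H e by linarith
  next
    case False
    then have "v \<in> set (w#rest)" using 1(3) by simp
    then have H: "(snd v - snd w) + (snd v - snd (last (w#rest))) \<le> int (bcnt (w#rest))"
      using 1(1)[OF pr] by simp
    show ?thesis unfolding eqs using H e by linarith
  qed
qed (auto simp: bs_path_def)

lemma pow_ge: "(n::nat) \<ge> 3 \<Longrightarrow> n ^ j \<ge> 2 * j + 1"
proof (induction j)
  case (Suc j)
  have "n ^ Suc j = n * n ^ j" by simp
  also have "\<dots> \<ge> 3 * n ^ j" using Suc by simp
  finally have "3 * n ^ j \<le> n ^ Suc j" .
  moreover have "2 * Suc j + 1 \<le> 3 * n ^ j" using Suc.IH[OF Suc.prems] by simp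
  ultimately show ?case by linarith
qed simp

lemma bs_pow_b: "bs_pow n bs_b k = (0, int k)"
  by (induction k) (auto simp: bs_one_def bs_mult_def bs_b_def)

lemma lower:
  fixes r s :: rat and m :: int
  assumes n: "n > 2" and p: "bs_path n p" and hp: "hd p = (r, m)" and lp: "last p = (s, m + int k - int k')"
    and s: "s = r + of_nat n powi (m + int k)"
  shows "length p \<ge> k + k' + 2"
proof -
  have ne: "p \<noteq> []" using p bs_path_def by auto
  define M where "M = Max (snd ` set p)"
  have fin: "finite (snd ` set p)" by simp
  have allM: "\<forall>v\<in>set p. snd v \<le> M" unfolding M_def using fin by auto
  have "M \<in> snd ` set p" unfolding M_def using fin ne by (intro Max_in) auto
  then obtain v where v: "v \<in> set p" "snd v = M" by blast
  have A: "of_nat n powi (m + int k) \<le> of_nat (acnt p) * (of_nat n :: rat) powi M"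
    using L1[OF _ p allM] n hp lp s by simp
  have B: "(M - m) + (M - (m + int k - int k')) \<le> int (bcnt p)"
    using L2[OF p v(1)] hp lp v(2) by simp
  have len0: "acnt p + bcnt p = length p - 1" by (rule cnt_len)
  have len: "int (length p) = int (acnt p) + int (bcnt p) + 1" using len0 ne
    by (cases p) auto
  have "hd p \<in> set p" "last p \<in> set p" using ne by simp_all
  then have "snd (hd p) \<le> M" "snd (last p) \<le> M" using allM by blast+
  then have Mm: "m \<le> M" and Ml: "m + int k - int k' \<le> M" using hp lp by simp_all
  have B2: "2 * M - 2 * m - int k + int k' \<le> int (bcnt p)" using B by simp
  have npos: "(0::rat) < of_nat n" using n by simp
  show ?thesis
  proof (cases "M \<ge> m + int k")
    case True
    have "acnt p \<noteq> 0"
    proof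
      assume "acnt p = 0"
      then show False using A npos zero_less_power_int[OF npos, of "m + int k"] by simp
    qed
    then have "int (acnt p) \<ge> 1" by simp
    then show ?thesis using B2 len True by linarith
  next
    case False
    define j where "j = nat (m + int k - M)"
    have mk: "m + int k = M + int j" using False j_def by simp
    have "(of_nat n :: rat) powi (m + int k) = of_nat n powi M * of_nat n ^ j"
      unfolding mk using npos by (simp add: power_int_add)
    then have "of_nat n powi M * of_nat n ^ j \<le> of_nat n powi M * (of_nat (acnt p) :: rat)"
      using A by (simp add: mult.commute)
    then have "(of_nat n :: rat) ^ j \<le> of_nat (acnt p)"
      using zero_less_power_int[OF npos, of M] by simp
    then have "n ^ j \<le> acnt p" by (metis of_nat_le_iff of_nat_power)
    moreover have "n ^ j \<ge> 2 * j + 1" using pow_ge n by simp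
    ultimately have aj: "int (acnt p) \<ge> 2 * int j + 1" by linarith
    show ?thesis using B2 len mk aj by linarith
  qed
qed

theorem lemma2:
  fixes n :: nat and x y :: bs_elt and k k' :: nat
  assumes "n > 2"
    and "x \<in> bs_carrier n" and "y \<in> bs_carrier n"
    and "bs_mult n y (bs_pow n bs_b k') = bs_mult n (bs_mult n x (bs_pow n bs_b k)) bs_a"
  shows "\<exists>p. bs_geodesic n x y p
           \<and> bs_mult n x (bs_pow n bs_b k) \<in> set p
           \<and> bs_mult n y (bs_pow n bs_b k') \<in> set p"
proof -
  obtain r m where x: "x = (r, m)" by (cases x)
  obtain s m' where y: "y = (s, m')" by (cases y)
  have eq: "s = r + of_nat n powi (m + int k)" "m' = m + int k - int k'"
    using assms(4) unfolding x y bs_pow_b by (auto simp: bs_mult_def bs_a_def)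
  have xk: "bs_mult n x (bs_pow n bs_b k) = (r, m + int k)" unfolding x bs_pow_b by (simp add: bs_mult_def)
  have yk: "bs_mult n y (bs_pow n bs_b k') = (s, m + int k)" unfolding y bs_pow_b eq(2) by (simp add: bs_mult_def)
  define f where "f i = (if i \<le> k then (r, m + int i) else (s, m + int k - int (i - k - 1)))" for i
  define p where "p = map f [0..<k + k' + 2]"
  have len: "length p = Suc (k + k' + 1)" unfolding p_def by simp
  have path: "bs_path n p" unfolding bs_path_def
  proof (intro conjI allI impI)
    show "p \<noteq> []" unfolding p_def by simp
    fix i assume i: "Suc i < length p"
    then have iN: "Suc i < k + k' + 2" using len by simp
    then have pi: "p ! i = f i" "p ! Suc i = f (Suc i)" unfolding p_def by (auto simp del: upt_Suc)
    show "bs_adj n (p ! i) (p ! Suc i)" unfolding pi bs_adj_def bs_gens_def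
    proof (cases "i < k")
      case True
      then have "f (Suc i) = bs_mult n (f i) bs_b" unfolding f_def by (simp add: bs_mult_def bs_b_def)
      then show "\<exists>s\<in>{bs_a, bs_a_inv, bs_b, bs_b_inv}. f (Suc i) = bs_mult n (f i) s" by blast
    next
      case False
      show "\<exists>s\<in>{bs_a, bs_a_inv, bs_b, bs_b_inv}. f (Suc i) = bs_mult n (f i) s"
      proof (cases "i = k")
        case True
        then have "f (Suc i) = bs_mult n (f i) bs_a" unfolding f_def eq by (simp add: bs_mult_def bs_a_def)
        then show ?thesis by blast
      next
        case False
        then have "f (Suc i) = bs_mult n (f i) bs_b_inv" using \<open>\<not> i < k\<close> unfolding f_def
          by (simp add: bs_mult_def bs_b_inv_def Suc_diff_Suc)
        then show ?thesis by blast
      qed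
    qed
  qed
  have hd: "hd p = x" unfolding p_def x f_def by (simp add: hd_map upt_rec)
  have lst: "last p = y" unfolding p_def y f_def eq by (simp add: last_map)
  have dist: "bs_dist n x y = k + k' + 1" unfolding bs_dist_def
  proof (rule Least_equality)
    show "\<exists>p. bs_path n p \<and> hd p = x \<and> last p = y \<and> length p = Suc (k + k' + 1)"
      using path hd lst len by blast
  next
    fix l assume "\<exists>p. bs_path n p \<and> hd p = x \<and> last p = y \<and> length p = Suc l"
    then obtain q where q: "bs_path n q" "hd q = x" "last q = y" "length q = Suc l" by blast
    have "length q \<ge> k + k' + 2"
      using lower[OF assms(1) q(1), where r=r and m=m and k=k and s=s and k'=k'] q(2,3) x y eq by simp
    then show "k + k' + 1 \<le> l" using q(4) by simp
  qed
  have "f k \<in> set p" "f (Suc k) \<in> set p" unfolding p_def set_map set_upt by (rule imageI, simp)+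
  moreover have "f k = (r, m + int k)" "f (Suc k) = (s, m + int k)" unfolding f_def by auto
  ultimately have m1: "(r, m + int k) \<in> set p" "(s, m + int k) \<in> set p" by simp_all
  have g: "bs_geodesic n x y p" unfolding bs_geodesic_def using path hd lst len dist by simp
  show ?thesis unfolding xk yk using g m1 by blast
qed

end
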